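(* Let $(\alpha_n)_{n\ge0}$ be complex numbers with $0<|\alpha_n|<1$ for all $n$, and let $\mu_{n,r,s}$ be as in the context. For all nonnegative integers $n,r,s$, \[ \mu_{n,r,s}=\sum_{p\in\mathrm{Sch}_{n,r,s}}\mathrm{wt}_S(p). \]
   Context: For a polynomial $f(z)=\sum_{k=0}^n a_kz^k$ of degree $n$, write $\overline{f}(z)=\sum_k\overline{a_k}z^k$ and $f^*(z)=z^n\overline{f}(1/z)$. Define monic $\Phi_n$ by $\Phi_0=1$, $\Phi_{n+1}(z)=z\Phi_n(z)-\overline{\alpha_n}\Phi_n^*(z)$. Let $\mathcal{L}$ be the unique linear functional on Laurent polynomials with $\mathcal{L}(1)=1$ and $\mathcal{L}(\Phi_m(z)\overline{\Phi_n}(1/z))=0$ for $m\neq n$; set $\langle f,g\rangle=\mathcal{L}(f(z)\overline{g}(1/z))$ and $\mu_{n,r,s}=\langle\Phi_s(z),z^n\Phi_r(z)\rangle/\langle\Phi_s,\Phi_s\rangle$. Set $\alpha_{-1}=-1$. A Schröder path is a lattice path in $\mathbb{Z}\times\mathbb{Z}_{\ge0}$ with steps $(1,1)$, $(1,0)$, $(0,-1)$; $\mathrm{Sch}_{n,r,s}$ is the set of Schröder paths from $(0,r)$ to $(n,s)$ that do not start with a vertical down-step $(0,-1)$. The weight $\mathrm{wt}_S(p)$ is the product of step weights: $(a,b)\to(a+1,b+1)$ has weight $1$; $(a,b)\to(a+1,b)$ has weight $-\overline{\alpha_{b-1}}/\overline{\alpha_b}$; $(a,b)\to(a,b-1)$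 has weight $\frac{\overline{\alpha_{b-2}}}{\overline{\alpha_{b-1}}}(1-|\alpha_{b-1}|^2)$. *)

theory Defs
  imports "HOL-Analysis.Analysis" "HOL-Computational_Algebra.Polynomial"
begin

text \<open>Verblunsky coefficients are given as alpha :: nat => complex; alpha_{-1} = -1.\<close>
definition alphaX :: "(nat \<Rightarrow> complex) \<Rightarrow> int \<Rightarrow> complex" where
  "alphaX \<alpha> k = (if k = -1 then -1 else \<alpha> (nat k))"

text \<open>f^*(z) = z^n conj(f)(1/z) with n = deg f.\<close>
definition pstar :: "complex poly \<Rightarrow> complex poly" where
  "pstar f = reflect_poly (map_poly cnj f)"

fun Phi :: "(nat \<Rightarrow> complex) \<Rightarrow> nat \<Rightarrow> complex poly" where
  "Phi \<alpha> 0 = 1"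
| "Phi \<alpha> (Suc n) = [:0, 1:] * Phi \<alpha> n - smult (cnj (\<alpha> n)) (pstar (Phi \<alpha> n))"

text \<open>A linear functional on Laurent polynomials is determined by its moments
  c k = L(z^k), k :: int.  The bilinear form <f,g> = L(f(z) conj(g)(1/z)).\<close>
definition ipL :: "(int \<Rightarrow> complex) \<Rightarrow> complex poly \<Rightarrow> complex poly \<Rightarrow> complex" where
  "ipL c f g = (\<Sum>j\<le>degree f. \<Sum>k\<le>degree g.
       coeff f j * cnj (coeff g k) * c (int j - int k))"

definition mu :: "(nat \<Rightarrow> complex) \<Rightarrow> (int \<Rightarrow> complex) \<Rightarrow> nat \<Rightarrow> nat \<Rightarrow> nat \<Rightarrow> complex" where
  "mu \<alpha> c n r s = ipL c (Phi \<alpha> s) (monom 1 n * Phi \<alpha> r) / ipL c (Phi \<alpha> s) (Phi \<alpha> s)"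

text \<open>Schroeder paths as step sequences: U = (1,1), H = (1,0), D = (0,-1).\<close>
datatype step = U | H | D

fun pvalid :: "int \<Rightarrow> step list \<Rightarrow> bool" where
  "pvalid b [] = True"
| "pvalid b (U # p) = pvalid (b + 1) p"
| "pvalid b (H # p) = pvalid b p"
| "pvalid b (D # p) = (b \<ge> 1 \<and> pvalid (b - 1) p)"

fun pend :: "int \<Rightarrow> step list \<Rightarrow> int" where
  "pend b [] = b"
| "pend b (U # p) = pend (b + 1) p"
| "pend b (H # p) = pend b p"
| "pend b (D # p) = pend (b - 1) p"

definition xlen :: "step list \<Rightarrow> nat" where
  "xlen p = length (filter (\<lambda>x. x \<noteq> D) p)"

definition Sch :: "nat \<Rightarrow> nat \<Rightarrow> nat \<Rightarrow> step list set" where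
  "Sch n r s = {p. pvalid (int r) p \<and> pend (int r) p = int s \<and> xlen p = n
                  \<and> (p = [] \<or> hd p \<noteq> D)}"

fun wtS :: "(nat \<Rightarrow> complex) \<Rightarrow> int \<Rightarrow> step list \<Rightarrow> complex" where
  "wtS \<alpha> b [] = 1"
| "wtS \<alpha> b (U # p) = wtS \<alpha> (b + 1) p"
| "wtS \<alpha> b (H # p) = (- cnj (alphaX \<alpha> (b - 1)) / cnj (alphaX \<alpha> b)) * wtS \<alpha> b p"
| "wtS \<alpha> b (D # p) = (cnj (alphaX \<alpha> (b - 2)) / cnj (alphaX \<alpha> (b - 1))
        * (1 - (cmod (alphaX \<alpha> (b - 1)))\<^sup>2)) * wtS \<alpha> (b - 1) p"

end

theory Submission
  imports Defs
begin


lemma coeff_pstar: "coeff (pstar f) j = (if j \<le> degree f then cnj (coeff f (degree f - j)) else 0)"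
  unfolding pstar_def by (auto simp: coeff_reflect_poly degree_map_poly coeff_map_poly)

lemma Phi_coeff: "coeff (Phi \<alpha> k) k = 1 \<and> (\<forall>j>k. coeff (Phi \<alpha> k) j = 0)"
proof (induction k)
  case 0
  then show ?case by (auto simp: coeff_1)
next
  case (Suc k)
  have dk: "degree (Phi \<alpha> k) \<le> k" using Suc by (auto intro: degree_le)
  show ?case using Suc dk by (auto simp: coeff_pCons coeff_pstar split: nat.splits)
qed

lemma degree_Phi[simp]: "degree (Phi \<alpha> k) = k"
  using Phi_coeff[of \<alpha> k] by (metis degree_le le_antisym le_degree zero_neq_one)

lemma lead_Phi[simp]: "coeff (Phi \<alpha> k) k = 1"
  using Phi_coeff by blast

lemma coeff_pstar_Phi: "coeff (pstar (Phi \<alpha> n)) j = (if j \<le> n then cnj (coeff (Phi \<alpha> n) (n-j)) else 0)"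
  by (simp add: coeff_pstar del: Phi.simps)

lemma coeff_Phi_Suc: "coeff (Phi \<alpha> (Suc k)) i = (if i = 0 then 0 else coeff (Phi \<alpha> k) (i - 1))
   - cnj (\<alpha> k) * (if i \<le> k then cnj (coeff (Phi \<alpha> k) (k-i)) else 0)"
  by (simp add: coeff_pstar_Phi coeff_pCons split: nat.splits)

lemma pstar_Phi_Suc: "pstar (Phi \<alpha> (Suc k)) = pstar (Phi \<alpha> k) - smult (\<alpha> k) (pCons 0 (Phi \<alpha> k))"
proof (rule poly_eqI)
  fix j
  have hi: "coeff (Phi \<alpha> k) i = 0" if "i > k" for i using Phi_coeff that by blast
  show "coeff (pstar (Phi \<alpha> (Suc k))) j = coeff (pstar (Phi \<alpha> k) - smult (\<alpha> k) (pCons 0 (Phi \<alpha> k))) j"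
    unfolding coeff_pstar_Phi coeff_diff coeff_smult coeff_pCons coeff_Phi_Suc
    apply (cases j)
     apply (auto simp: hi split: nat.splits)
    done
qed



lemma xlen_simps[simp]: "xlen [] = 0" "xlen (U#p) = Suc (xlen p)" "xlen (H#p) = Suc (xlen p)" "xlen (D#p) = xlen p"
  by (auto simp: xlen_def)

lemma len_bound: "pvalid b p \<Longrightarrow> length p \<le> 2 * xlen p + nat b"
proof (induction p arbitrary: b)
  case Nil thus ?case by simp
next
  case (Cons x p)
  show ?case
  proof (cases x)
    case U thus ?thesis using Cons.IH[of "b+1"] Cons.prems by auto
  next
    case H thus ?thesis using Cons.IH[of "b"] Cons.prems by auto
  next
    case D thus ?thesis using Cons.IH[of "b-1"] Cons.prems by auto
  qed
qed

definition AP :: "nat \<Rightarrow> int \<Rightarrow> int \<Rightarrow> step list set" where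
  "AP n b t = {p. pvalid b p \<and> pend b p = t \<and> xlen p = n}"

definition SP :: "nat \<Rightarrow> int \<Rightarrow> int \<Rightarrow> step list set" where
  "SP n b t = {p \<in> AP n b t. p = [] \<or> hd p \<noteq> D}"

lemma step_univ: "set p \<subseteq> {U,H,D}"
  using step.exhaust by blast

lemma finite_AP: "finite (AP n b t)"
proof -
  have "AP n b t \<subseteq> {p. set p \<subseteq> {U,H,D} \<and> length p \<le> 2*n + nat b}"
    unfolding AP_def using len_bound step_univ by fastforce
  moreover have "finite {p. set p \<subseteq> {U,H,D} \<and> length p \<le> 2*n + nat b}"
    by (rule finite_lists_length_le) simp
  ultimately show ?thesis by (rule finite_subset)
qed

lemma finite_SP: "finite (SP n b t)"
  using finite_AP[of n b t] unfolding SP_def by simp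

lemma sum_split_head:
  assumes "finite X"
  shows "sum f X = sum f (X \<inter> {[]}) + sum (\<lambda>q. f (U#q)) {q. U#q \<in> X}
     + sum (\<lambda>q. f (H#q)) {q. H#q \<in> X} + sum (\<lambda>q. f (D#q)) {q. D#q \<in> X}"
proof -
  have fin: "finite {q. x#q \<in> X}" for x
    using finite_vimageI[OF assms, of "Cons x"] by (simp add: vimage_def)
  have eq: "X = (((X \<inter> {[]}) \<union> Cons U ` {q. U#q \<in> X}) \<union> Cons H ` {q. H#q \<in> X}) \<union> Cons D ` {q. D#q \<in> X}"
  proof (rule set_eqI)
    fix p show "p \<in> X \<longleftrightarrow> p \<in> (((X \<inter> {[]}) \<union> Cons U ` {q. U#q \<in> X}) \<union> Cons H ` {q. H#q \<in> X}) \<union> Cons D ` {q. D#q \<in> X}"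
    proof (cases p)
      case Nil thus ?thesis by auto
    next
      case (Cons x q) thus ?thesis by (cases x) auto
    qed
  qed
  have "sum f X = sum f (((X \<inter> {[]}) \<union> Cons U ` {q. U#q \<in> X}) \<union> Cons H ` {q. H#q \<in> X}) + sum f (Cons D ` {q. D#q \<in> X})"
    by (subst eq, rule sum.union_disjoint) (auto simp: fin)
  also have "sum f (((X \<inter> {[]}) \<union> Cons U ` {q. U#q \<in> X}) \<union> Cons H ` {q. H#q \<in> X})
     = sum f ((X \<inter> {[]}) \<union> Cons U ` {q. U#q \<in> X}) + sum f (Cons H ` {q. H#q \<in> X})"
    by (rule sum.union_disjoint) (auto simp: fin)
  also have "sum f ((X \<inter> {[]}) \<union> Cons U ` {q. U#q \<in> X}) = sum f (X \<inter> {[]}) + sum f (Cons U ` {q. U#q \<in> X})"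
    by (rule sum.union_disjoint) (auto simp: fin)
  finally show ?thesis by (simp add: sum.reindex)
qed

context fixes \<alpha> :: "nat \<Rightarrow> complex" begin

definition hw :: "int \<Rightarrow> complex" where "hw b = - cnj (alphaX \<alpha> (b - 1)) / cnj (alphaX \<alpha> b)"
definition dw :: "int \<Rightarrow> complex" where "dw b = cnj (alphaX \<alpha> (b - 2)) / cnj (alphaX \<alpha> (b - 1))
        * (1 - (cmod (alphaX \<alpha> (b - 1)))\<^sup>2)"

lemma wtS_simps2: "wtS \<alpha> b (H # p) = hw b * wtS \<alpha> b p" "wtS \<alpha> b (D # p) = dw b * wtS \<alpha> (b-1) p"
  by (simp_all add: hw_def dw_def)

definition Aw where "Aw n b t = (\<Sum>p\<in>AP n b t. wtS \<alpha> b p)"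
definition Sw where "Sw n b t = (\<Sum>p\<in>SP n b t. wtS \<alpha> b p)"

lemma AP_nil: "AP n b t \<inter> {[]} = (if n = 0 \<and> b = t then {[]} else {})"
  by (auto simp: AP_def)
lemma AP_U: "{q. U#q \<in> AP n b t} = (if n > 0 then AP (n-1) (b+1) t else {})"
  by (auto simp: AP_def)
lemma AP_H: "{q. H#q \<in> AP n b t} = (if n > 0 then AP (n-1) b t else {})"
  by (auto simp: AP_def)
lemma AP_D: "{q. D#q \<in> AP n b t} = (if b \<ge> 1 then AP n (b-1) t else {})"
  by (auto simp: AP_def)
lemma SP_nil: "SP n b t \<inter> {[]} = (if n = 0 \<and> b = t then {[]} else {})"
  by (auto simp: AP_def SP_def)
lemma SP_U: "{q. U#q \<in> SP n b t} = (if n > 0 then AP (n-1) (b+1) t else {})"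
  by (auto simp: AP_def SP_def)
lemma SP_H: "{q. H#q \<in> SP n b t} = (if n > 0 then AP (n-1) b t else {})"
  by (auto simp: AP_def SP_def)
lemma SP_D: "{q. D#q \<in> SP n b t} = {}"
  by (auto simp: AP_def SP_def)

lemma Aw_rec: "Aw n b t = (if n = 0 \<and> b = t then 1 else 0)
   + (if n > 0 then Aw (n-1) (b+1) t + hw b * Aw (n-1) b t else 0)
   + (if b \<ge> 1 then dw b * Aw n (b-1) t else 0)"
  unfolding Aw_def
  apply (subst sum_split_head[OF finite_AP])
  apply (simp only: AP_nil AP_U AP_H AP_D wtS_simps2 wtS.simps(1,2))
  apply (simp add: sum_distrib_left del: wtS.simps(3,4))
  done

lemma Sw_rec: "Sw n b t = (if n = 0 \<and> b = t then 1 else 0)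
   + (if n > 0 then Aw (n-1) (b+1) t + hw b * Aw (n-1) b t else 0)"
  unfolding Sw_def Aw_def
  apply (subst sum_split_head[OF finite_SP])
  apply (simp only: SP_nil SP_U SP_H SP_D wtS_simps2 wtS.simps(1,2))
  apply (simp add: sum_distrib_left del: wtS.simps(3,4))
  done

lemma Aw_Sw: "Aw n b t = Sw n b t + (if b \<ge> 1 then dw b * Aw n (b-1) t else 0)"
  using Aw_rec[of n b t] Sw_rec[of n b t] by simp

end


lemma sum_rev_atMost: "(\<Sum>j\<le>d. g (d-j)) = (\<Sum>j\<le>(d::nat). g j)"
  by (rule sum.reindex_bij_witness[where i="\<lambda>i. d-i" and j="\<lambda>i. d-i"]) auto

lemma ipL_ext:
  assumes "degree f \<le> N" "degree g \<le> M"
  shows "ipL c f g = (\<Sum>j\<le>N. \<Sum>k\<le>M. coeff f j * cnj (coeff g k) * c (int j - int k))"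
proof -
  have inner: "(\<Sum>k\<le>M. coeff f j * cnj (coeff g k) * c (int j - int k))
      = (\<Sum>k\<le>degree g. coeff f j * cnj (coeff g k) * c (int j - int k))" for j
    by (rule sum.mono_neutral_right) (use assms in \<open>auto simp: coeff_eq_0\<close>)
  have "(\<Sum>j\<le>N. \<Sum>k\<le>degree g. coeff f j * cnj (coeff g k) * c (int j - int k))
      = (\<Sum>j\<le>degree f. \<Sum>k\<le>degree g. coeff f j * cnj (coeff g k) * c (int j - int k))"
    by (rule sum.mono_neutral_right) (use assms in \<open>auto simp: coeff_eq_0\<close>)
  thus ?thesis unfolding ipL_def inner by simp
qed

lemma ipL_add2: "ipL c f (g1 + g2) = ipL c f g1 + ipL c f g2"
proof -
  let ?M = "max (degree g1) (degree g2)"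
  have d: "degree (g1 + g2) \<le> ?M" by (rule degree_add_le) auto
  show ?thesis
    by (subst (1 2 3) ipL_ext[where N="degree f" and M="?M"])
       (auto simp: d ring_distribs sum.distrib)
qed

lemma ipL_smult2: "ipL c f (smult a g) = cnj a * ipL c f g"
  by (subst (1 2) ipL_ext[where N="degree f" and M="degree g"])
     (auto simp: sum_distrib_left mult_ac)

lemma ipL_add1: "ipL c (f1 + f2) g = ipL c f1 g + ipL c f2 g"
proof -
  let ?N = "max (degree f1) (degree f2)"
  have d: "degree (f1 + f2) \<le> ?N" by (rule degree_add_le) auto
  show ?thesis
    by (subst (1 2 3) ipL_ext[where N="?N" and M="degree g"])
       (auto simp: d ring_distribs sum.distrib)
qed

lemma ipL_smult1: "ipL c (smult a f) g = a * ipL c f g"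
  by (subst (1 2) ipL_ext[where N="degree f" and M="degree g"])
     (auto simp: sum_distrib_left mult_ac)

lemma ipL_diff1: "ipL c (f1 - f2) g = ipL c f1 g - ipL c f2 g"
  using ipL_add1[of c f1 "- f2" g] ipL_smult1[of c "-1" f2 g] by (simp add: smult_minus_left)

lemma ipL_zero2[simp]: "ipL c f 0 = 0"
  by (simp add: ipL_def)

lemma ipL_sum2: "ipL c f (\<Sum>t\<in>T. g t) = (\<Sum>t\<in>T. ipL c f (g t))"
  by (induction T rule: infinite_finite_induct) (auto simp: ipL_add2)

lemma ipL_shift: "ipL c (pCons 0 f) (pCons 0 g) = ipL c f g"
proof -
  have "ipL c (pCons 0 f) (pCons 0 g) = (\<Sum>j\<le>Suc (degree f). \<Sum>k\<le>Suc (degree g).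
       coeff (pCons 0 f) j * cnj (coeff (pCons 0 g) k) * c (int j - int k))"
    by (rule ipL_ext) (auto simp: degree_pCons_le)
  also have "\<dots> = (\<Sum>j\<le>degree f. \<Sum>k\<le>degree g. coeff f j * cnj (coeff g k) * c (int j - int k))"
    by (simp add: sum.atMost_Suc_shift del: sum.atMost_Suc)
  also have "\<dots> = ipL c f g" by (simp add: ipL_def)
  finally show ?thesis .
qed

lemma ipL_monom2N: assumes "degree f \<le> N" shows "ipL c f (monom 1 m) = (\<Sum>j\<le>N. coeff f j * c (int j - int m))"
proof -
  have "(\<Sum>k\<le>m. coeff f j * cnj (coeff (monom 1 m) k) * c (int j - int k)) = coeff f j * c (int j - int m)" for j
  proof -
    have "(\<Sum>k\<le>m. coeff f j * cnj (coeff (monom 1 m) k) * c (int j - int k))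
        = (\<Sum>k\<le>m. if k = m then coeff f j * c (int j - int k) else 0)"
      by (rule sum.cong) (auto simp: coeff_monom)
    thus ?thesis by simp
  qed
  thus ?thesis using assms by (subst ipL_ext[where N=N and M=m]) (auto simp: degree_monom_le)
qed

lemma ipL_one1N: "degree g \<le> M \<Longrightarrow> ipL c 1 g = (\<Sum>k\<le>M. cnj (coeff g k) * c (- int k))"
  by (subst ipL_ext[where N=0 and M=M]) auto



lemma degree_pstar_le: "degree (pstar f) \<le> degree f"
  by (rule degree_le) (auto simp: coeff_pstar)

lemma R2: "ipL c 1 (pstar f) = ipL c f (monom 1 (degree f))"
proof -
  let ?d = "degree f"
  have "ipL c 1 (pstar f) = (\<Sum>k\<le>?d. cnj (coeff (pstar f) k) * c (- int k))"
    by (rule ipL_one1N) (rule degree_pstar_le)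
  also have "\<dots> = (\<Sum>k\<le>?d. coeff f (?d - k) * c (int (?d - k) - int ?d))"
    by (rule sum.cong) (auto simp: coeff_pstar)
  also have "\<dots> = (\<Sum>k\<le>?d. coeff f k * c (int k - int ?d))"
    by (rule sum_rev_atMost[of "\<lambda>k. coeff f k * c (int k - int ?d)"])
  also have "\<dots> = ipL c f (monom 1 ?d)"
    by (rule ipL_monom2N[symmetric]) simp
  finally show ?thesis .
qed

lemma R1: "ipL c (pstar f) (monom 1 (Suc (degree f))) = ipL c 1 (pCons 0 f)"
proof -
  let ?d = "degree f"
  have "ipL c (pstar f) (monom 1 (Suc ?d)) = (\<Sum>j\<le>?d. coeff (pstar f) j * c (int j - int (Suc ?d)))"
    by (rule ipL_monom2N) (rule degree_pstar_le)
  also have "\<dots> = (\<Sum>j\<le>?d. cnj (coeff f (?d - j)) * c (- int (?d - j) - 1))"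
    by (rule sum.cong) (auto simp: coeff_pstar of_nat_diff intro!: arg_cong[where f=c])
  also have "\<dots> = (\<Sum>j\<le>?d. cnj (coeff f j) * c (- int j - 1))"
    by (rule sum_rev_atMost[of "\<lambda>j. cnj (coeff f j) * c (- int j - 1)"])
  also have "\<dots> = (\<Sum>k\<le>Suc ?d. cnj (coeff (pCons 0 f) k) * c (- int k))"
    by (simp add: sum.atMost_Suc_shift del: sum.atMost_Suc) (auto intro!: sum.cong arg_cong[where f=c])
  also have "\<dots> = ipL c 1 (pCons 0 f)"
    by (rule ipL_one1N[symmetric]) (simp add: degree_pCons_le)
  finally show ?thesis .
qed

lemma low_deg: "degree p \<le> d \<Longrightarrow> coeff p d = 0 \<Longrightarrow> p = 0 \<or> degree p < d"
  by (metis le_neq_implies_less leading_coeff_0_iff)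

lemma orth_low:
  assumes orth: "\<And>m k. m \<noteq> k \<Longrightarrow> ipL c (Phi \<alpha> m) (Phi \<alpha> k) = 0"
  shows "g = 0 \<or> degree g < s \<Longrightarrow> ipL c (Phi \<alpha> s) g = 0"
proof (induction "degree g" arbitrary: g rule: less_induct)
  case less
  show ?case
  proof (cases "g = 0")
    case True thus ?thesis by simp
  next
    case False
    let ?d = "degree g"
    have ds: "?d < s" using less.prems False by auto
    let ?h = "g - smult (coeff g ?d) (Phi \<alpha> ?d)"
    have hd: "degree ?h \<le> ?d"
      by (rule degree_diff_le) (auto intro: order.trans[OF degree_smult_le])
    have hc: "coeff ?h ?d = 0" by simp
    have h0: "ipL c (Phi \<alpha> s) ?h = 0"
      using low_deg[OF hd hc]
    proof
      assume "?h = 0" thus ?thesis by simp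
    next
      assume "degree ?h < ?d" thus ?thesis using less.hyps[of ?h] ds by auto
    qed
    have "g = ?h + smult (coeff g ?d) (Phi \<alpha> ?d)" by simp
    hence "ipL c (Phi \<alpha> s) g = ipL c (Phi \<alpha> s) ?h + cnj (coeff g ?d) * ipL c (Phi \<alpha> s) (Phi \<alpha> ?d)"
      by (metis ipL_add2 ipL_smult2)
    thus ?thesis using h0 orth[of s ?d] ds by simp
  qed
qed

definition kap where "kap c \<alpha> s = ipL c (Phi \<alpha> s) (Phi \<alpha> s)"

lemma kap_monom:
  assumes orth: "\<And>m k. m \<noteq> k \<Longrightarrow> ipL c (Phi \<alpha> m) (Phi \<alpha> k) = 0"
  shows "kap c \<alpha> s = ipL c (Phi \<alpha> s) (monom 1 s)"
proof -
  let ?h = "Phi \<alpha> s - monom 1 s"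
  have hd: "degree ?h \<le> s" by (rule degree_diff_le) (auto simp: degree_monom_le)
  have hc: "coeff ?h s = 0" by simp
  have "ipL c (Phi \<alpha> s) ?h = 0" by (rule orth_low[OF orth]) (use low_deg[OF hd hc] in auto)
  moreover have "Phi \<alpha> s = monom 1 s + ?h" by simp
  ultimately show ?thesis unfolding kap_def by (metis ipL_add2 add.right_neutral)
qed

lemma kap_Suc:
  assumes orth: "\<And>m k. m \<noteq> k \<Longrightarrow> ipL c (Phi \<alpha> m) (Phi \<alpha> k) = 0"
  shows "kap c \<alpha> (Suc s) = kap c \<alpha> s * (1 - cnj (\<alpha> s) * \<alpha> s)"
proof -
  have ms: "monom (1::complex) (Suc s) = pCons 0 (monom 1 s)" by (simp add: monom_Suc)
  have P: "Phi \<alpha> (Suc s) = pCons 0 (Phi \<alpha> s) - smult (cnj (\<alpha> s)) (pstar (Phi \<alpha> s))" by simp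
  have "kap c \<alpha> (Suc s) = ipL c (Phi \<alpha> (Suc s)) (monom 1 (Suc s))" by (rule kap_monom[OF orth])
  also have "\<dots> = ipL c (pCons 0 (Phi \<alpha> s)) (pCons 0 (monom 1 s))
      - cnj (\<alpha> s) * ipL c (pstar (Phi \<alpha> s)) (monom 1 (Suc s))"
    unfolding P ipL_diff1 ipL_smult1 ms ..
  also have "ipL c (pstar (Phi \<alpha> s)) (monom 1 (Suc s)) = ipL c 1 (pCons 0 (Phi \<alpha> s))"
    using R1[of c "Phi \<alpha> s"] by simp
  also have "pCons 0 (Phi \<alpha> s) = Phi \<alpha> (Suc s) + smult (cnj (\<alpha> s)) (pstar (Phi \<alpha> s))" by simp
  also have "ipL c 1 \<dots> = ipL c (Phi \<alpha> 0) (Phi \<alpha> (Suc s)) + \<alpha> s * ipL c 1 (pstar (Phi \<alpha> s))"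
    by (simp add: ipL_add2 ipL_smult2 del: Phi.simps(2))
  also have "ipL c 1 (pstar (Phi \<alpha> s)) = kap c \<alpha> s"
    using R2[of c "Phi \<alpha> s"] kap_monom[OF orth, of s] by simp
  finally show ?thesis
    using orth[of 0 "Suc s"] ipL_shift kap_monom[OF orth, of s] by (simp add: algebra_simps)
qed

lemma kap_nz:
  assumes orth: "\<And>m k. m \<noteq> k \<Longrightarrow> ipL c (Phi \<alpha> m) (Phi \<alpha> k) = 0"
    and a: "\<And>k. cmod (\<alpha> k) < 1" and c0: "c 0 = 1"
  shows "kap c \<alpha> s \<noteq> 0"
proof (induction s)
  case 0 thus ?case by (simp add: kap_def ipL_def c0)
next
  case (Suc s)
  have "cnj (\<alpha> s) * \<alpha> s = of_real ((cmod (\<alpha> s))\<^sup>2)" by (subst complex_norm_square) (simp add: mult.commute)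
  moreover have "(cmod (\<alpha> s))\<^sup>2 < 1" using a[of s] by (simp add: power_less_one_iff abs_square_less_1)
  ultimately have "1 - cnj (\<alpha> s) * \<alpha> s \<noteq> 0"
    by (metis less_irrefl of_real_1 of_real_eq_iff right_minus_eq)
  thus ?case using Suc kap_Suc[OF orth] by simp
qed



lemma smult_sum_right: "smult a (sum f T) = (\<Sum>x\<in>T. smult a (f x))"
  by (induction T rule: infinite_finite_induct) (auto simp: smult_add_right)

lemma zshift: "monom (1::'a::comm_ring_1) (Suc n) * p = monom 1 n * pCons 0 p"
  by (simp add: monom_Suc)

lemma alphaX_nat[simp]: "alphaX \<alpha> (int k) = \<alpha> k"
  by (simp add: alphaX_def)

lemma alphaX_m1[simp]: "alphaX \<alpha> (-1) = -1"
  by (simp add: alphaX_def)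

lemma alphaX_nz: "(\<And>k. \<alpha> k \<noteq> 0) \<Longrightarrow> alphaX \<alpha> (int k - 1) \<noteq> 0"
  by (cases k) (auto simp: alphaX_def)

lemma norm_sq_cnj: "(complex_of_real (cmod a))\<^sup>2 = a * cnj a"
  by (metis complex_norm_square of_real_power)

definition Psi where "Psi \<alpha> k = smult (-1 / alphaX \<alpha> (int k - 1)) (pstar (Phi \<alpha> k))"

lemma pstar_one[simp]: "pstar 1 = 1"
  by (simp add: pstar_def)

lemma Psi0: "Psi \<alpha> 0 = Phi \<alpha> 0"
  by (simp add: Psi_def)

lemma alg1:
  fixes P Q :: "complex poly"
  assumes "a \<noteq> 0" "b \<noteq> 0"
  shows "smult (-1/a) (P - smult a Q) = (Q - smult (cnj a) P) + smult (b / a * (1 - a * cnj a)) (smult (-1/b) P)"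
  using assms by (intro poly_eqI) (simp add: field_simps)

lemma alg2:
  fixes P Q :: "complex poly"
  assumes "a \<noteq> 0" "b \<noteq> 0"
  shows "Q = smult (-1/a) (P - smult a Q) + smult (- b / a) (smult (-1/b) P)"
  using assms by (intro poly_eqI) (simp add: field_simps)

lemma Psi_Suc:
  assumes nz: "\<And>k. \<alpha> k \<noteq> 0"
  shows "Psi \<alpha> (Suc k) = Phi \<alpha> (Suc k) + smult (cnj (dw \<alpha> (int (Suc k)))) (Psi \<alpha> k)"
proof -
  have e1: "cnj (dw \<alpha> (int (Suc k))) = alphaX \<alpha> (int k - 1) / \<alpha> k * (1 - \<alpha> k * cnj (\<alpha> k))"
    by (simp add: dw_def norm_sq_cnj algebra_simps)
  show ?thesis
    unfolding Psi_def e1 pstar_Phi_Suc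
    using alg1[OF nz[of k] alphaX_nz[where k=k, OF nz], of "pstar (Phi \<alpha> k)" "pCons 0 (Phi \<alpha> k)"]
    by simp
qed

lemma Phi_shift:
  assumes nz: "\<And>k. \<alpha> k \<noteq> 0"
  shows "pCons 0 (Phi \<alpha> k) = Psi \<alpha> (Suc k) + smult (cnj (hw \<alpha> (int k))) (Psi \<alpha> k)"
proof -
  have e1: "cnj (hw \<alpha> (int k)) = - alphaX \<alpha> (int k - 1) / \<alpha> k"
    by (simp add: hw_def)
  show ?thesis
    unfolding Psi_def e1 pstar_Phi_Suc
    using alg2[OF nz[of k] alphaX_nz[where k=k, OF nz], of "pCons 0 (Phi \<alpha> k)" "pstar (Phi \<alpha> k)"]
    by simp
qed

lemma Sw0: "Sw \<alpha> 0 b t = (if b = t then 1 else 0)"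
  using Sw_rec[of \<alpha> 0 b t] by simp

lemma Sw_Suc: "Sw \<alpha> (Suc n) b t = Aw \<alpha> n (b+1) t + hw \<alpha> b * Aw \<alpha> n b t"
  using Sw_rec[of \<alpha> "Suc n" b t] by simp

lemma Aw_Sw_Suc: "Aw \<alpha> n (int (Suc b)) t = Sw \<alpha> n (int (Suc b)) t + dw \<alpha> (int (Suc b)) * Aw \<alpha> n (int b) t"
  using Aw_Sw[of \<alpha> n "int (Suc b)" t] by simp

lemma Aw_Sw_0: "Aw \<alpha> n 0 t = Sw \<alpha> n 0 t"
  using Aw_Sw[of \<alpha> n 0 t] by simp

lemma sum_delta_poly: "b \<le> K \<Longrightarrow> (\<Sum>t\<le>K. smult (cnj (if int b = int t then 1 else 0)) (Phi \<alpha> t)) = Phi \<alpha> b"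
proof -
  assume "b \<le> K"
  have "(\<Sum>t\<le>K. smult (cnj (if int b = int t then 1 else 0)) (Phi \<alpha> t)) = (\<Sum>t\<le>K. if t = b then Phi \<alpha> t else 0)"
    by (rule sum.cong) auto
  thus ?thesis using \<open>b \<le> K\<close> by simp
qed

definition P1 where "P1 \<alpha> n = (\<forall>b K. n + b \<le> K \<longrightarrow> monom 1 n * Phi \<alpha> b = (\<Sum>t\<le>K. smult (cnj (Sw \<alpha> n (int b) (int t))) (Phi \<alpha> t)))"
definition P2 where "P2 \<alpha> n = (\<forall>b K. n + b \<le> K \<longrightarrow> monom 1 n * Psi \<alpha> b = (\<Sum>t\<le>K. smult (cnj (Aw \<alpha> n (int b) (int t))) (Phi \<alpha> t)))"

lemma P1_0: "P1 \<alpha> 0"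
  unfolding P1_def Sw0 using sum_delta_poly by simp

lemma P2_of_P1:
  assumes nz: "\<And>k. \<alpha> k \<noteq> 0" and h: "P1 \<alpha> n"
  shows "P2 \<alpha> n"
  unfolding P2_def
proof (intro allI impI)
  fix b K assume "n + b \<le> K"
  thus "monom 1 n * Psi \<alpha> b = (\<Sum>t\<le>K. smult (cnj (Aw \<alpha> n (int b) (int t))) (Phi \<alpha> t))"
  proof (induction b)
    case 0
    thus ?case using h[unfolded P1_def, rule_format, of 0 K] unfolding Psi0 by (simp add: Aw_Sw_0 del: Phi.simps)
  next
    case (Suc b)
    have "monom 1 n * Psi \<alpha> (Suc b) = monom 1 n * Phi \<alpha> (Suc b) + smult (cnj (dw \<alpha> (int (Suc b)))) (monom 1 n * Psi \<alpha> b)"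
      unfolding Psi_Suc[OF nz] by (simp add: ring_distribs)
    also have "\<dots> = (\<Sum>t\<le>K. smult (cnj (Sw \<alpha> n (int (Suc b)) (int t))) (Phi \<alpha> t))
        + smult (cnj (dw \<alpha> (int (Suc b)))) (\<Sum>t\<le>K. smult (cnj (Aw \<alpha> n (int b) (int t))) (Phi \<alpha> t))"
      using h[unfolded P1_def, rule_format, of "Suc b" K] Suc by (simp del: Phi.simps)
    also have "\<dots> = (\<Sum>t\<le>K. smult (cnj (Aw \<alpha> n (int (Suc b)) (int t))) (Phi \<alpha> t))"
      unfolding Aw_Sw_Suc smult_sum_right sum.distrib[symmetric]
      by (rule sum.cong) (auto simp: smult_add_left)
    finally show ?case .
  qed
qed

lemma P1_Suc:
  assumes nz: "\<And>k. \<alpha> k \<noteq> 0" and h: "P2 \<alpha> n"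
  shows "P1 \<alpha> (Suc n)"
  unfolding P1_def
proof (intro allI impI)
  fix b K assume K: "Suc n + b \<le> K"
  have "monom 1 (Suc n) * Phi \<alpha> b = monom 1 n * Psi \<alpha> (Suc b) + smult (cnj (hw \<alpha> (int b))) (monom 1 n * Psi \<alpha> b)"
    unfolding zshift Phi_shift[OF nz] by (simp add: ring_distribs)
  also have "\<dots> = (\<Sum>t\<le>K. smult (cnj (Aw \<alpha> n (int (Suc b)) (int t))) (Phi \<alpha> t))
      + smult (cnj (hw \<alpha> (int b))) (\<Sum>t\<le>K. smult (cnj (Aw \<alpha> n (int b) (int t))) (Phi \<alpha> t))"
    using h[unfolded P2_def, rule_format, of b K] h[unfolded P2_def, rule_format, of "Suc b" K] K by simp
  also have "\<dots> = (\<Sum>t\<le>K. smult (cnj (Sw \<alpha> (Suc n) (int b) (int t))) (Phi \<alpha> t))"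
    unfolding Sw_Suc smult_sum_right sum.distrib[symmetric]
    by (rule sum.cong) (auto simp: smult_add_left add.commute)
  finally show "monom 1 (Suc n) * Phi \<alpha> b = (\<Sum>t\<le>K. smult (cnj (Sw \<alpha> (Suc n) (int b) (int t))) (Phi \<alpha> t))" .
qed

lemma P1_all:
  assumes nz: "\<And>k. \<alpha> k \<noteq> 0"
  shows "P1 \<alpha> n"
  by (induction n) (auto intro: P1_0 P1_Suc[OF nz] P2_of_P1[OF nz])

lemma Sch_SP: "Sch n r s = SP n (int r) (int s)"
  by (auto simp: Sch_def SP_def AP_def)

theorem theorem3p10:
  fixes \<alpha> :: "nat \<Rightarrow> complex" and c :: "int \<Rightarrow> complex"
  assumes "\<And>k. 0 < cmod (\<alpha> k) \<and> cmod (\<alpha> k) < 1"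
    and "c 0 = 1"
    and "\<And>m k. m \<noteq> k \<Longrightarrow> ipL c (Phi \<alpha> m) (Phi \<alpha> k) = 0"
  shows "mu \<alpha> c n r s = (\<Sum>p\<in>Sch n r s. wtS \<alpha> (int r) p)"
proof -
  note orth = assms(3)
  have nz: "\<And>k. \<alpha> k \<noteq> 0" using assms(1) by force
  have lt: "\<And>k. cmod (\<alpha> k) < 1" using assms(1) by blast
  let ?K = "n + r + s"
  have exp: "monom 1 n * Phi \<alpha> r = (\<Sum>t\<le>?K. smult (cnj (Sw \<alpha> n (int r) (int t))) (Phi \<alpha> t))"
    using P1_all[where n=n, OF nz] unfolding P1_def by simp
  have "ipL c (Phi \<alpha> s) (monom 1 n * Phi \<alpha> r) = (\<Sum>t\<le>?K. Sw \<alpha> n (int r) (int t) * ipL c (Phi \<alpha> s) (Phi \<alpha> t))"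
    unfolding exp ipL_sum2 ipL_smult2 by simp
  also have "\<dots> = (\<Sum>t\<le>?K. if t = s then Sw \<alpha> n (int r) (int s) * kap c \<alpha> s else 0)"
    by (rule sum.cong) (auto simp: orth kap_def)
  also have "\<dots> = Sw \<alpha> n (int r) (int s) * kap c \<alpha> s" by simp
  finally have "mu \<alpha> c n r s = Sw \<alpha> n (int r) (int s) * kap c \<alpha> s / kap c \<alpha> s"
    unfolding mu_def kap_def by simp
  also have "\<dots> = Sw \<alpha> n (int r) (int s)" using kap_nz[OF orth lt assms(2)] by simp
  also have "\<dots> = (\<Sum>p\<in>Sch n r s. wtS \<alpha> (int r) p)" unfolding Sw_def Sch_SP ..
  finally show ?thesis .
qed


end
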